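(* Let $r\neq0$ be an integer and $K$ a field of characteristic not dividing $2r$ and different from $3$, and assume $r=\varepsilon^4$ for some $\varepsilon\in K$. Let $E_r$ be the elliptic curve $y^2=x^3-r^{-1}x$ with point at infinity $O$, and define $S_0=\{(a,b)\in K^2: b^2=a^3-a,\ a^4+6a^2-3=0\}$, $S_1=\{(a,b)\in K^2: b^2=a^3-a,\ 3a^4-6a^2-1=0\}$, $S_{1,r}=\{(a,b)\in K^2: b^2=a^3-r^{-1}a,\ 3r^2a^4-6ra^2-1=0\}$. Then there exist bijections $E_r[3](K)\setminus\{O\}\to S_{1,r}\to S_1\to S_0$, where $E_r[3](K)$ is the set of $K$-rational $3$-torsion points of $E_r$. *)

theory Defs
  imports Main
begin

datatype 'a ec_point = Infinity | Point 'a 'a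

definition on_curve :: "'a::field \<Rightarrow> 'a \<Rightarrow> 'a ec_point \<Rightarrow> bool" where
  "on_curve A B P = (case P of Infinity \<Rightarrow> True
      | Point x y \<Rightarrow> y^2 = x^3 + A * x + B)"

fun ec_add :: "'a::field \<Rightarrow> 'a ec_point \<Rightarrow> 'a ec_point \<Rightarrow> 'a ec_point" where
  "ec_add A Infinity P = P"
| "ec_add A P Infinity = P"
| "ec_add A (Point x1 y1) (Point x2 y2) =
     (if x1 = x2 \<and> y1 = - y2 then Infinity
      else (let l = (if x1 = x2 then (3 * x1^2 + A) / (2 * y1)
                     else (y2 - y1) / (x2 - x1));
                x3 = l^2 - x1 - x2
            in Point x3 (l * (x1 - x3) - y1)))"

definition three_torsion :: "'a::field \<Rightarrow> 'a \<Rightarrow> 'a ec_point set" where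
  "three_torsion A B = {P. on_curve A B P \<and> ec_add A P (ec_add A P P) = Infinity}"

definition S0 :: "('a::field \<times> 'a) set" where
  "S0 = {(a, b). b^2 = a^3 - a \<and> a^4 + 6 * a^2 - 3 = 0}"

definition S1 :: "('a::field \<times> 'a) set" where
  "S1 = {(a, b). b^2 = a^3 - a \<and> 3 * a^4 - 6 * a^2 - 1 = 0}"

definition S1r :: "int \<Rightarrow> ('a::field \<times> 'a) set" where
  "S1r r = {(a, b). b^2 = a^3 - inverse (of_int r) * a \<and>
                    3 * (of_int r)^2 * a^4 - 6 * of_int r * a^2 - 1 = 0}"

end

theory Submission
  imports Defs
begin

lemma four_nz:
  assumes "(2::'a::field) \<noteq> 0" shows "(4::'a) \<noteq> 0"
proof -
  have "(4::'a) = 2*2" by simp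
  thus ?thesis using assms by (metis no_zero_divisors)
qed

lemma neg_neq:
  assumes "(2::'a::field) \<noteq> 0" "(y::'a) \<noteq> 0" shows "y \<noteq> -y"
proof
  assume "y = -y"
  hence "2*y = 0" by (metis add.right_inverse mult_2)
  thus False using assms by simp
qed

lemma tors_iff:
  fixes x y s :: "'a::field"
  assumes c: "y^2 = x^3 - s*x" and s: "s \<noteq> 0" and two: "(2::'a) \<noteq> 0"
  shows "ec_add (-s) (Point x y) (ec_add (-s) (Point x y) (Point x y)) = Infinity
     \<longleftrightarrow> 3*x^4 - 6*s*x^2 - s^2 = 0"
proof (cases "y = 0")
  case True
  then have "ec_add (-s) (Point x y) (Point x y) = Infinity" by simp
  hence L: "ec_add (-s) (Point x y) (ec_add (-s) (Point x y) (Point x y)) \<noteq> Infinity" by simp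
  have "x * (x^2 - s) = 0" using c True by (simp add: right_diff_distrib power2_eq_square power3_eq_cube mult.assoc)
  hence "x = 0 \<or> x^2 = s" by (simp only: mult_eq_0_iff right_minus_eq)
  then have "3*x^4 - 6*s*x^2 - s^2 \<noteq> 0"
  proof
    assume "x = 0" then show ?thesis using s by simp
  next
    assume h: "x^2 = s"
    have "x^4 = (x^2)^2" by (simp flip: power_mult)
    hence e: "3*x^4 - 6*s*x^2 - s^2 = -4 * s^2" unfolding h by (simp add: power2_eq_square)
    have "-4 * s^2 \<noteq> 0" using s four_nz[OF two] by simp
    then show ?thesis unfolding e .
  qed
  with L show ?thesis by simp
next
  case False
  define l where "l = (3 * x^2 + - s) / (2 * y)"
  define x3 where "x3 = l^2 - x - x"
  have D: "ec_add (-s) (Point x y) (Point x y) = Point x3 (l*(x - x3) - y)"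
    using neg_neq[OF two False] unfolding l_def x3_def by (simp add: Let_def)
  have "ec_add (-s) (Point x y) (ec_add (-s) (Point x y) (Point x y)) = Infinity \<longleftrightarrow> x = x3"
    unfolding D by (simp add: Let_def)
  also have "\<dots> \<longleftrightarrow> l^2 = 3*x" unfolding x3_def by (auto simp: algebra_simps)
  also have "\<dots> \<longleftrightarrow> (3 * x^2 - s)^2 = 12*x*y^2"
  proof -
    have "l^2 = (3 * x^2 - s)^2 / (4*y^2)" unfolding l_def by (simp add: power_divide power_mult_distrib)
    moreover have "(4::'a)*y^2 \<noteq> 0" using four_nz[OF two] False by simp
    ultimately have "l^2 = 3*x \<longleftrightarrow> (3 * x^2 - s)^2 = 3*x*(4*y^2)"
      by (simp add: divide_eq_eq)
    thus ?thesis by (simp add: mult.assoc)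
  qed
  also have "\<dots> \<longleftrightarrow> 3*x^4 - 6*s*x^2 - s^2 = 0"
  proof -
    have "(3 * x^2 - s)^2 - 12*x*y^2 = -(3*x^4 - 6*s*x^2 - s^2)" unfolding c
      by (simp add: algebra_simps power2_eq_square power3_eq_cube power4_eq_xxxx)
    thus ?thesis by (metis eq_iff_diff_eq_0 neg_equal_0_iff_equal)
  qed
  finally show ?thesis .
qed
lemma poly_scale:
  fixes x \<rho> :: "'a::field"
  assumes "\<rho> \<noteq> 0"
  shows "3*x^4 - 6*inverse \<rho>*x^2 - (inverse \<rho>)^2 = 0 \<longleftrightarrow> 3*\<rho>^2*x^4 - 6*\<rho>*x^2 - 1 = 0"
proof -
  have "3*\<rho>^2*x^4 - 6*\<rho>*x^2 - 1 = \<rho>^2 * (3*x^4 - 6*inverse \<rho>*x^2 - (inverse \<rho>)^2)"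
    using assms by (simp add: field_simps power2_eq_square)
  thus ?thesis using assms by simp
qed

lemma part1:
  fixes \<rho> :: "'a::field"
  assumes r: "\<rho> \<noteq> 0" and two: "(2::'a) \<noteq> 0"
  shows "bij_betw (\<lambda>P. case P of Point a b \<Rightarrow> (a,b) | Infinity \<Rightarrow> (0,0))
     (three_torsion (- inverse \<rho>) 0 - {Infinity})
     {(a, b). b^2 = a^3 - inverse \<rho> * a \<and> 3 * \<rho>^2 * a^4 - 6 * \<rho> * a^2 - 1 = 0}"
proof (rule bij_betw_byWitness[where f'="\<lambda>(a,b). Point a b"])
  have key: "ec_add (- inverse \<rho>) (Point x y) (ec_add (- inverse \<rho>) (Point x y) (Point x y)) = Infinity
     \<longleftrightarrow> 3 * \<rho>^2 * x^4 - 6 * \<rho> * x^2 - 1 = 0" if "y^2 = x^3 - inverse \<rho> * x" for x y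
    using tors_iff[OF that _ two] poly_scale[OF r] r by simp
  show "\<forall>a\<in>three_torsion (- inverse \<rho>) 0 - {Infinity}.
       (case case a of Infinity \<Rightarrow> (0, 0) | Point a b \<Rightarrow> (a, b) of (a, b) \<Rightarrow> Point a b) = a"
    by (auto split: ec_point.splits)
  show "\<forall>a'\<in>{(a, b). b^2 = a^3 - inverse \<rho> * a \<and> 3 * \<rho>^2 * a^4 - 6 * \<rho> * a^2 - 1 = 0}.
       (case case a' of (a, b) \<Rightarrow> Point a b of Infinity \<Rightarrow> (0, 0) | Point a b \<Rightarrow> (a, b)) = a'"
    by auto
  show "(\<lambda>P. case P of Infinity \<Rightarrow> (0, 0) | Point a b \<Rightarrow> (a, b)) ` (three_torsion (- inverse \<rho>) 0 - {Infinity})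
    \<subseteq> {(a, b). b^2 = a^3 - inverse \<rho> * a \<and> 3 * \<rho>^2 * a^4 - 6 * \<rho> * a^2 - 1 = 0}"
  proof
    fix q assume "q \<in> (\<lambda>P. case P of Infinity \<Rightarrow> (0, 0) | Point a b \<Rightarrow> (a, b)) ` (three_torsion (- inverse \<rho>) 0 - {Infinity})"
    then obtain x y where q: "q = (x,y)" and P: "Point x y \<in> three_torsion (- inverse \<rho>) 0"
      by (auto split: ec_point.splits)
    hence c: "y^2 = x^3 - inverse \<rho> * x" by (simp add: three_torsion_def on_curve_def)
    with P key[OF c] show "q \<in> {(a, b). b^2 = a^3 - inverse \<rho> * a \<and> 3 * \<rho>^2 * a^4 - 6 * \<rho> * a^2 - 1 = 0}"
      by (simp add: q three_torsion_def)
  qed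
  show "(\<lambda>(a, b). Point a b) ` {(a, b). b^2 = a^3 - inverse \<rho> * a \<and> 3 * \<rho>^2 * a^4 - 6 * \<rho> * a^2 - 1 = 0}
    \<subseteq> three_torsion (- inverse \<rho>) 0 - {Infinity}"
    using key by (auto simp: three_torsion_def on_curve_def)
qed

lemma part2:
  fixes e :: "'a::field"
  assumes e: "e \<noteq> 0"
  shows "bij_betw (\<lambda>(a,b). (e^2*a, e^3*b))
     {(a, b). b^2 = a^3 - inverse (e^4) * a \<and> 3 * (e^4)^2 * a^4 - 6 * e^4 * a^2 - 1 = 0}
     {(a, b). b^2 = a^3 - a \<and> 3 * a^4 - 6 * a^2 - 1 = 0}"
proof (rule bij_betw_byWitness[where f'="\<lambda>(a,b). (a/e^2, b/e^3)"])
  show "\<forall>a\<in>{(a, b). b^2 = a^3 - inverse (e^4) * a \<and> 3 * (e^4)^2 * a^4 - 6 * e^4 * a^2 - 1 = 0}.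
       (case case a of (a, b) \<Rightarrow> (e^2 * a, e^3 * b) of (a, b) \<Rightarrow> (a / e^2, b / e^3)) = a"
    using e by auto
  show "\<forall>a'\<in>{(a, b). b^2 = a^3 - a \<and> 3 * a^4 - 6 * a^2 - 1 = 0}.
       (case case a' of (a, b) \<Rightarrow> (a / e^2, b / e^3) of (a, b) \<Rightarrow> (e^2 * a, e^3 * b)) = a'"
    using e by auto
  show "(\<lambda>(a, b). (e^2 * a, e^3 * b)) ` {(a, b). b^2 = a^3 - inverse (e^4) * a \<and> 3 * (e^4)^2 * a^4 - 6 * e^4 * a^2 - 1 = 0}
    \<subseteq> {(a, b). b^2 = a^3 - a \<and> 3 * a^4 - 6 * a^2 - 1 = 0}"
  proof -
    have H: "(e^2 * a, e^3 * b) \<in> {(a, b). b^2 = a^3 - a \<and> 3 * a^4 - 6 * a^2 - 1 = 0}" if h1: "b^2 = a^3 - inverse (e^4) * a" and h2: "3 * (e^4)^2 * a^4 - 6 * e^4 * a^2 - 1 = 0" for a b :: 'a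
    proof -
      have "(e^3*b)^2 = e^6 * b^2" by (simp add: power_mult_distrib flip: power_mult)
      also have "\<dots> = (e^2*a)^3 - e^2*a" unfolding h1 using e
        by (simp add: field_simps power_mult_distrib flip: power_mult power_add)
      finally have "(e^3*b)^2 = (e^2*a)^3 - e^2*a \<and> 3 * (e^2*a)^4 - 6 * (e^2*a)^2 - 1 = 0"
        using h2 by (simp add: power_mult_distrib mult.assoc flip: power_mult)
      thus ?thesis by simp
    qed
    show ?thesis using H by auto
  qed
  show "(\<lambda>(a, b). (a / e^2, b / e^3)) ` {(a, b). b^2 = a^3 - a \<and> 3 * a^4 - 6 * a^2 - 1 = 0}
    \<subseteq> {(a, b). b^2 = a^3 - inverse (e^4) * a \<and> 3 * (e^4)^2 * a^4 - 6 * e^4 * a^2 - 1 = 0}"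
  proof -
    have H: "(a / e^2, b / e^3) \<in> {(a, b). b^2 = a^3 - inverse (e^4) * a \<and> 3 * (e^4)^2 * a^4 - 6 * e^4 * a^2 - 1 = 0}" if h1: "b^2 = a^3 - a" and h2: "3 * a^4 - 6 * a^2 - 1 = 0" for a b :: 'a
    proof -
      have "(b/e^3)^2 = b^2 / e^6" by (simp add: power_divide flip: power_mult)
      also have "\<dots> = (a/e^2)^3 - inverse (e^4) * (a/e^2)" unfolding h1 using e
        by (simp add: field_simps power_divide flip: power_mult power_add)
      finally have "(b/e^3)^2 = (a/e^2)^3 - inverse (e^4) * (a/e^2) \<and> 3 * (e^4)^2 * (a/e^2)^4 - 6 * e^4 * (a/e^2)^2 - 1 = 0"
        using h2 e by (simp add: power_divide flip: power_mult)
      thus ?thesis by simp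
    qed
    show ?thesis using H by auto
  qed
qed

lemma part3:
  assumes three: "(3::'a::field) \<noteq> 0"
  shows "bij_betw (\<lambda>(a,b). (-1/a, b/a^2))
     {(a::'a, b). b^2 = a^3 - a \<and> 3 * a^4 - 6 * a^2 - 1 = 0}
     {(a, b). b^2 = a^3 - a \<and> a^4 + 6 * a^2 - 3 = 0}"
proof (rule bij_betw_byWitness[where f'="\<lambda>(a,b). (-1/a, b/a^2)"])
  show "\<forall>a\<in>{(a::'a, b). b^2 = a^3 - a \<and> 3 * a^4 - 6 * a^2 - 1 = 0}.
       (case case a of (a, b) \<Rightarrow> (-1/a, b/a^2) of (a, b) \<Rightarrow> (-1/a, b/a^2)) = a"
    by (auto simp: power_divide)
  show "\<forall>a'\<in>{(a::'a, b). b^2 = a^3 - a \<and> a^4 + 6 * a^2 - 3 = 0}.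
       (case case a' of (a, b) \<Rightarrow> (-1/a, b/a^2) of (a, b) \<Rightarrow> (-1/a, b/a^2)) = a'"
    using three by (auto simp: power_divide)
  show "(\<lambda>(a, b). (-1/a, b/a^2)) ` {(a::'a, b). b^2 = a^3 - a \<and> 3 * a^4 - 6 * a^2 - 1 = 0}
    \<subseteq> {(a, b). b^2 = a^3 - a \<and> a^4 + 6 * a^2 - 3 = 0}"
  proof -
    have H: "(-1/a, b/a^2) \<in> {(a, b). b^2 = a^3 - a \<and> a^4 + 6 * a^2 - 3 = 0}" if h1: "b^2 = a^3 - a" and h2: "3 * a^4 - 6 * a^2 - 1 = 0" for a b :: 'a
    proof -
      have a: "a \<noteq> 0" using h2 by auto
      have "(b/a^2)^2 = b^2/a^4" by (simp add: power_divide flip: power_mult)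
      also have "\<dots> = (-1/a)^3 - (-1/a)" unfolding h1 using a
        by (simp add: field_simps power2_eq_square power3_eq_cube power4_eq_xxxx)
      finally have "(b/a^2)^2 = (-1/a)^3 + 1/a \<and> (1/a)^4 + 6 * (1/a)^2 - 3 = 0"
        using h2 a by (simp add: field_simps power2_eq_square power3_eq_cube power4_eq_xxxx)
      thus ?thesis by simp
    qed
    show ?thesis using H by auto
  qed
  show "(\<lambda>(a, b). (-1/a, b/a^2)) ` {(a::'a, b). b^2 = a^3 - a \<and> a^4 + 6 * a^2 - 3 = 0}
    \<subseteq> {(a, b). b^2 = a^3 - a \<and> 3 * a^4 - 6 * a^2 - 1 = 0}"
  proof -
    have H: "(-1/a, b/a^2) \<in> {(a, b). b^2 = a^3 - a \<and> 3 * a^4 - 6 * a^2 - 1 = 0}" if h1: "b^2 = a^3 - a" and h2: "a^4 + 6 * a^2 - 3 = 0" for a b :: 'a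
    proof -
      have a: "a \<noteq> 0" using h2 three by auto
      have "(b/a^2)^2 = b^2/a^4" by (simp add: power_divide flip: power_mult)
      also have "\<dots> = (-1/a)^3 - (-1/a)" unfolding h1 using a
        by (simp add: field_simps power2_eq_square power3_eq_cube power4_eq_xxxx)
      finally have "(b/a^2)^2 = (-1/a)^3 + 1/a \<and> 3 * (1/a)^4 - 6 * (1/a)^2 - 1 = 0"
        using h2 a by (simp add: field_simps power2_eq_square power3_eq_cube power4_eq_xxxx)
      thus ?thesis by simp
    qed
    show ?thesis using H by auto
  qed
qed

theorem lemma3p10:
  fixes r :: int and \<epsilon> :: "'a::field"
  assumes "r \<noteq> 0"
    and "(of_int (2 * r) :: 'a) \<noteq> 0"
    and "(3 :: 'a) \<noteq> 0"
    and "(of_int r :: 'a) = \<epsilon> ^ 4"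
  shows "\<exists>f g h.
    bij_betw f (three_torsion (- inverse (of_int r :: 'a)) 0 - {Infinity}) (S1r r :: ('a \<times> 'a) set)
    \<and> bij_betw g (S1r r :: ('a \<times> 'a) set) (S1 :: ('a \<times> 'a) set)
    \<and> bij_betw h (S1 :: ('a \<times> 'a) set) (S0 :: ('a \<times> 'a) set)"
proof -
  have r0: "(of_int r :: 'a) \<noteq> 0" and two: "(2::'a) \<noteq> 0" using assms(2) by auto
  have e0: "\<epsilon> \<noteq> 0" using r0 assms(4) by auto
  have 1: "bij_betw (\<lambda>P. case P of Point a b \<Rightarrow> (a,b) | Infinity \<Rightarrow> (0,0))
     (three_torsion (- inverse (of_int r :: 'a)) 0 - {Infinity}) (S1r r :: ('a \<times> 'a) set)"
    using part1[OF r0 two] unfolding S1r_def .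
  have 2: "bij_betw (\<lambda>(a,b). (\<epsilon>^2*a, \<epsilon>^3*b)) (S1r r :: ('a \<times> 'a) set) (S1 :: ('a \<times> 'a) set)"
    using part2[OF e0] unfolding S1r_def S1_def assms(4) .
  have 3: "bij_betw (\<lambda>(a,b). (-1/a, b/a^2)) (S1 :: ('a \<times> 'a) set) (S0 :: ('a \<times> 'a) set)"
    using part3[OF assms(3)] unfolding S1_def S0_def .
  from 1 2 3 show ?thesis by blast
qed

end
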